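(* Let $A\in M_N(\{0,1\})$ be primitive, with the notation of the context. Fix $\beta\in V_A\setminus\{\emptyset\}$ and a $\sigma$-invariant ergodic Borel probability measure $\tau$ on $\Omega_A$. For $n\in\mathbb N$ let $\pi_n:\Omega_A\to V_A^n$ be the map $x\mapsto x_1\cdots x_n$. Then for $\tau$-almost every $x\in C(\beta)$, $$\lim_{n\to\infty}\frac{\lambda^A_\beta(\pi_n(x))}{n}=\lambda_A\,\tau(F_A).$$ Moreover, there are constants $0<c_0\le c_1<1$, independent of $\tau$, such that $c_0\le\tau(F_A)\le c_1\lambda_A^{-1}$.
   Context: Let $A\in M_N(\{0,1\})$ be a primitive matrix. A word $x_1\cdots x_k$ over $\{1,\dots,N\}$ is admissible if $A_{x_n,x_{n+1}}=1$ for $1\le n\le k-1$; $V_A^k$ is the set of admissible words of length $k$ ($V_A^0=\{\emptyset\}$, $\emptyset$ the empty word), $V_A=\bigsqcup_k V_A^k$, $|\alpha|$ denotes length, and $\beta V_A$ denotes the set of admissible words beginning with $\beta$. $\Omega_A=\{x\in\{1,\dots,N\}^{\mathbb N}:A_{x_n,x_{n+1}}=1\ \forall n\}$ with the product topology and left shift $\sigma$; for $\alpha=\alpha_1\cdots\alpha_n$, $C(\alpha)=\{x\in\Omega_A:x_i=\alpha_i,\ i\le n\}$. Let $\lambda_A>1$ be the Perron–Frobenius eigenvalue of $A$ and $u$ the positive vector with $Au=\lambda_Au$, $\sum_iu_i=1$. Set $P_{i,j}=A_{i,j}u_j/(\lambda_Au_i)$ and $F_A:\Omega_A\to[0,1)$,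 $F_A(x)=u_{x_1}(1-P_{x_1,x_2})$. For $\beta\in V_A\setminus\{\emptyset\}$ and $\nu\in\beta V_A$ define $\lambda^A_\beta(\beta)=\lambda_Au_{\beta_{|\beta|}}$ and, for $\nu\ne\beta$, $$\lambda^A_\beta(\nu)=\lambda_Au_{\nu_{|\nu|}}+\lambda_A\sum_{k=0}^{|\nu|-|\beta|-1}u_{\nu_{|\beta|+k}}\bigl(1-P_{\nu_{|\beta|+k},\nu_{|\beta|+k+1}}\bigr).$$ (These are the nonzero eigenvalues of the log-Laplacian on the cylinder $C(\beta)$.) *)

theory Defs
  imports "HOL-Probability.Probability"
begin

text \<open>Matrices are functions nat => nat => real, indexed by the alphabet {1..N}.
  Infinite sequences x = x_1 x_2 ... are functions nat => nat with x_1 = x 0.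
  Words are lists; the paper's 1-based letter nu_i is the list entry nu ! (i - 1).\<close>

fun mpow :: "nat \<Rightarrow> (nat \<Rightarrow> nat \<Rightarrow> real) \<Rightarrow> nat \<Rightarrow> nat \<Rightarrow> nat \<Rightarrow> real" where
  "mpow N A 0 i j = (if i = j then 1 else 0)"
| "mpow N A (Suc k) i j = (\<Sum>l\<in>{1..N}. mpow N A k i l * A l j)"

definition zero_one_matrix :: "nat \<Rightarrow> (nat \<Rightarrow> nat \<Rightarrow> real) \<Rightarrow> bool" where
  "zero_one_matrix N A \<longleftrightarrow> (\<forall>i\<in>{1..N}. \<forall>j\<in>{1..N}. A i j \<in> {0, 1})"

definition primitive :: "nat \<Rightarrow> (nat \<Rightarrow> nat \<Rightarrow> real) \<Rightarrow> bool" where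
  "primitive N A \<longleftrightarrow> (\<forall>i\<in>{1..N}. \<forall>j\<in>{1..N}. A i j \<ge> 0) \<and>
     (\<exists>k\<ge>1. \<forall>i\<in>{1..N}. \<forall>j\<in>{1..N}. mpow N A k i j > 0)"

definition is_eigenvalue :: "nat \<Rightarrow> (nat \<Rightarrow> nat \<Rightarrow> real) \<Rightarrow> complex \<Rightarrow> bool" where
  "is_eigenvalue N A \<mu> \<longleftrightarrow> (\<exists>v :: nat \<Rightarrow> complex. (\<exists>i\<in>{1..N}. v i \<noteq> 0) \<and>
     (\<forall>i\<in>{1..N}. (\<Sum>j\<in>{1..N}. of_real (A i j) * v j) = \<mu> * v i))"

definition PF_data :: "nat \<Rightarrow> (nat \<Rightarrow> nat \<Rightarrow> real) \<Rightarrow> real \<Rightarrow> (nat \<Rightarrow> real) \<Rightarrow> bool" where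
  "PF_data N A lam u \<longleftrightarrow>
     is_eigenvalue N A (of_real lam) \<and> (\<forall>\<mu>. is_eigenvalue N A \<mu> \<longrightarrow> cmod \<mu> \<le> lam) \<and>
     (\<forall>i\<in>{1..N}. u i > 0) \<and> (\<Sum>i\<in>{1..N}. u i) = 1 \<and>
     (\<forall>i\<in>{1..N}. (\<Sum>j\<in>{1..N}. A i j * u j) = lam * u i)"

definition admissible :: "nat \<Rightarrow> (nat \<Rightarrow> nat \<Rightarrow> real) \<Rightarrow> nat list \<Rightarrow> bool" where
  "admissible N A w \<longleftrightarrow> set w \<subseteq> {1..N} \<and>
     (\<forall>n. Suc n < length w \<longrightarrow> A (w ! n) (w ! Suc n) = 1)"

definition Omega :: "nat \<Rightarrow> (nat \<Rightarrow> nat \<Rightarrow> real) \<Rightarrow> (nat \<Rightarrow> nat) set" where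
  "Omega N A = {x. (\<forall>n. x n \<in> {1..N}) \<and> (\<forall>n. A (x n) (x (Suc n)) = 1)}"

definition shift :: "(nat \<Rightarrow> nat) \<Rightarrow> (nat \<Rightarrow> nat)" where
  "shift x = (\<lambda>n. x (Suc n))"

definition cyl :: "nat \<Rightarrow> (nat \<Rightarrow> nat \<Rightarrow> real) \<Rightarrow> nat list \<Rightarrow> (nat \<Rightarrow> nat) set" where
  "cyl N A \<alpha> = {x \<in> Omega N A. \<forall>i<length \<alpha>. x i = \<alpha> ! i}"

definition proj :: "nat \<Rightarrow> (nat \<Rightarrow> nat) \<Rightarrow> nat list" where
  "proj n x = map x [0..<n]"

definition Pmat :: "(nat \<Rightarrow> nat \<Rightarrow> real) \<Rightarrow> real \<Rightarrow> (nat \<Rightarrow> real) \<Rightarrow> nat \<Rightarrow> nat \<Rightarrow> real" where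
  "Pmat A lam u i j = A i j * u j / (lam * u i)"

definition F_A :: "(nat \<Rightarrow> nat \<Rightarrow> real) \<Rightarrow> real \<Rightarrow> (nat \<Rightarrow> real) \<Rightarrow> (nat \<Rightarrow> nat) \<Rightarrow> real" where
  "F_A A lam u x = u (x 0) * (1 - Pmat A lam u (x 0) (x 1))"

text \<open>lambda^A_beta(nu) for nu in beta V_A.  In the paper nu_{|beta|+k} (1-based) is
  nu ! (|beta| + k - 1) here; for nu = beta the sum is empty.\<close>
definition lam_beta ::
  "(nat \<Rightarrow> nat \<Rightarrow> real) \<Rightarrow> real \<Rightarrow> (nat \<Rightarrow> real) \<Rightarrow> nat list \<Rightarrow> nat list \<Rightarrow> real" where
  "lam_beta A lam u \<beta> \<nu> =
     (if \<nu> = \<beta> then lam * u (last \<beta>)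
      else lam * u (last \<nu>) + lam * (\<Sum>k<length \<nu> - length \<beta>.
        u (\<nu> ! (length \<beta> + k - 1)) *
          (1 - Pmat A lam u (\<nu> ! (length \<beta> + k - 1)) (\<nu> ! (length \<beta> + k)))))"

text \<open>Borel probability measures on Omega_A (product topology; nat is discrete).\<close>
definition borel_prob_on_Omega :: "nat \<Rightarrow> (nat \<Rightarrow> nat \<Rightarrow> real) \<Rightarrow> (nat \<Rightarrow> nat) measure \<Rightarrow> bool" where
  "borel_prob_on_Omega N A \<tau> \<longleftrightarrow> prob_space \<tau> \<and>
     sets \<tau> = sets (restrict_space borel (Omega N A))"

definition shift_invariant :: "(nat \<Rightarrow> nat) measure \<Rightarrow> bool" where
  "shift_invariant \<tau> \<longleftrightarrow> shift \<in> measurable \<tau> \<tau> \<and>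
     (\<forall>B\<in>sets \<tau>. emeasure \<tau> (shift -` B \<inter> space \<tau>) = emeasure \<tau> B)"

definition shift_ergodic :: "(nat \<Rightarrow> nat) measure \<Rightarrow> bool" where
  "shift_ergodic \<tau> \<longleftrightarrow> (\<forall>B\<in>sets \<tau>. shift -` B \<inter> space \<tau> = B \<longrightarrow>
     measure \<tau> B = 0 \<or> measure \<tau> B = 1)"

definition inv_ergodic_borel :: "nat \<Rightarrow> (nat \<Rightarrow> nat \<Rightarrow> real) \<Rightarrow> (nat \<Rightarrow> nat) measure \<Rightarrow> bool" where
  "inv_ergodic_borel N A \<tau> \<longleftrightarrow>
     borel_prob_on_Omega N A \<tau> \<and> shift_invariant \<tau> \<and> shift_ergodic \<tau>"

end

theory Submission
  imports Defs
begin
locale mpt = prob_space M for M :: "'a measure" +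
  fixes T :: "'a \<Rightarrow> 'a"
  assumes Tm: "T \<in> measurable M M"
  and Tinv: "\<And>B. B \<in> sets M \<Longrightarrow> emeasure M (T -` B \<inter> space M) = emeasure M B"
  and Terg: "\<And>B. B \<in> sets M \<Longrightarrow> T -` B \<inter> space M = B \<Longrightarrow> measure M B = 0 \<or> measure M B = 1"
begin

lemma Tk_meas: "(T ^^ k) \<in> measurable M M"
proof (induction k)
  case 0 then show ?case by simp
next
  case (Suc k)
  have "T \<circ> (T^^k) \<in> measurable M M" by (rule measurable_comp[OF Suc.IH Tm])
  then show ?case by (simp add: comp_def)
qed

lemma Tk_space: "x \<in> space M \<Longrightarrow> (T ^^ k) x \<in> space M"
  by (rule measurable_space[OF Tk_meas])

lemma T_space: "x \<in> space M \<Longrightarrow> T x \<in> space M"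
  by (rule measurable_space[OF Tm])

lemma distr_T: "distr M M T = M"
proof (rule measure_eqI)
  show "sets (distr M M T) = sets M" by simp
  fix B assume "B \<in> sets (distr M M T)"
  then have "B \<in> sets M" by simp
  then show "emeasure (distr M M T) B = emeasure M B"
    by (simp add: emeasure_distr[OF Tm] Tinv)
qed

lemma integral_T:
  fixes f :: "'a \<Rightarrow> real"
  assumes "f \<in> borel_measurable M"
  shows "integral\<^sup>L M (\<lambda>x. f (T x)) = integral\<^sup>L M f"
proof -
  have "integral\<^sup>L (distr M M T) f = integral\<^sup>L M (\<lambda>x. f (T x))"
    by (rule integral_distr[OF Tm assms])
  then show ?thesis by (simp add: distr_T)
qed

lemma integral_Tk:
  fixes f :: "'a \<Rightarrow> real"
  assumes "f \<in> borel_measurable M"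
  shows "integral\<^sup>L M (\<lambda>x. f ((T^^k) x)) = integral\<^sup>L M f"
proof (induction k)
  case 0 then show ?case by simp
next
  case (Suc k)
  have m: "(\<lambda>x. f ((T^^k) x)) \<in> borel_measurable M"
    using measurable_comp[OF Tk_meas assms] by (simp add: comp_def)
  have "integral\<^sup>L M (\<lambda>x. f ((T^^Suc k) x)) = integral\<^sup>L M (\<lambda>x. (\<lambda>y. f ((T^^k) y)) (T x))"
    by (simp add: funpow_Suc_right del: funpow.simps)
  also have "\<dots> = integral\<^sup>L M (\<lambda>x. f ((T^^k) x))" by (rule integral_T[OF m])
  finally show ?case using Suc by simp
qed

definition S :: "('a \<Rightarrow> real) \<Rightarrow> nat \<Rightarrow> 'a \<Rightarrow> real" where
  "S f n x = (\<Sum>k<n. f ((T^^k) x))"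

definition avg :: "('a \<Rightarrow> real) \<Rightarrow> nat \<Rightarrow> 'a \<Rightarrow> real" where
  "avg f n x = S f n x / real n"

definition fbar :: "('a \<Rightarrow> real) \<Rightarrow> 'a \<Rightarrow> real" where
  "fbar f x = real_of_ereal (limsup (\<lambda>n. ereal (avg f n x)))"

lemma S_meas: assumes "f \<in> borel_measurable M" shows "S f n \<in> borel_measurable M"
proof -
  have "\<And>k. (\<lambda>x. f ((T^^k) x)) \<in> borel_measurable M"
    using measurable_comp[OF Tk_meas assms] by (simp add: comp_def)
  then show ?thesis unfolding S_def by (intro borel_measurable_sum) auto
qed

lemma avg_meas: assumes "f \<in> borel_measurable M" shows "avg f n \<in> borel_measurable M"
  unfolding avg_def using S_meas[OF assms] by (intro borel_measurable_divide) auto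

lemma fbar_meas: assumes "f \<in> borel_measurable M" shows "fbar f \<in> borel_measurable M"
proof -
  have "\<And>n. (\<lambda>x. ereal (avg f n x)) \<in> borel_measurable M"
    using avg_meas[OF assms] by (rule borel_measurable_ereal)
  then have "(\<lambda>x. limsup (\<lambda>n. ereal (avg f n x))) \<in> borel_measurable M"
    by (rule borel_measurable_limsup)
  then show ?thesis unfolding fbar_def by (rule borel_measurable_real_of_ereal)
qed

lemma S_add: "S f (a + b) x = S f a x + S f b ((T^^a) x)"
  unfolding S_def
proof (induction b)
  case 0 then show ?case by simp
next
  case (Suc b)
  have "(T ^^ (a+b)) x = (T^^b) ((T^^a) x)" by (metis comp_apply funpow_add add.commute)
  with Suc show ?case by (simp add: add.assoc)
qed

lemma S_Suc_left: "S f (Suc n) x = f x + S f n (T x)"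
  using S_add[of f 1 n x] by (simp add: S_def)

lemma S_bound:
  assumes "\<forall>y\<in>space M. \<bar>f y\<bar> \<le> K" "x \<in> space M"
  shows "\<bar>S f n x\<bar> \<le> real n * K"
proof -
  have "\<bar>S f n x\<bar> \<le> (\<Sum>k<n. \<bar>f ((T^^k) x)\<bar>)" unfolding S_def by (rule sum_abs)
  also have "\<dots> \<le> (\<Sum>k<n. K)" by (intro sum_mono) (use assms Tk_space in auto)
  finally show ?thesis by simp
qed

lemma avg_bound:
  assumes "\<forall>y\<in>space M. \<bar>f y\<bar> \<le> K" "x \<in> space M" "0 \<le> K"
  shows "\<bar>avg f n x\<bar> \<le> K"
proof (cases "n = 0")
  case True then show ?thesis using assms by (simp add: avg_def)
next
  case False
  have "\<bar>avg f n x\<bar> = \<bar>S f n x\<bar> / real n" by (simp add: avg_def)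
  also have "\<dots> \<le> real n * K / real n"
    using S_bound[OF assms(1,2)] by (intro divide_right_mono) auto
  finally show ?thesis using False by simp
qed

lemma limsup_avg_bound:
  assumes "\<forall>y\<in>space M. \<bar>f y\<bar> \<le> K" "x \<in> space M" "0 \<le> K"
  shows "limsup (\<lambda>n. ereal (avg f n x)) \<le> ereal K"
    and "ereal (-K) \<le> limsup (\<lambda>n. ereal (avg f n x))"
proof -
  have b: "\<And>n. \<bar>avg f n x\<bar> \<le> K" by (rule avg_bound[OF assms])
  have b1: "-K \<le> avg f n x" for n using b[of n] by linarith
  have b2: "avg f n x \<le> K" for n using b[of n] by linarith
  show "limsup (\<lambda>n. ereal (avg f n x)) \<le> ereal K"
    by (rule Limsup_bounded) (simp add: b2)
  have "ereal (-K) \<le> liminf (\<lambda>n. ereal (avg f n x))"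
    by (rule Liminf_bounded) (simp add: b1)
  also have "\<dots> \<le> limsup (\<lambda>n. ereal (avg f n x))" by (rule Liminf_le_Limsup) simp
  finally show "ereal (-K) \<le> limsup (\<lambda>n. ereal (avg f n x))" .
qed

lemma fbar_eq:
  assumes "\<forall>y\<in>space M. \<bar>f y\<bar> \<le> K" "x \<in> space M" "0 \<le> K"
  shows "ereal (fbar f x) = limsup (\<lambda>n. ereal (avg f n x))"
  using limsup_avg_bound[OF assms] unfolding fbar_def
  by (cases "limsup (\<lambda>n. ereal (avg f n x))") auto

lemma fbar_bound:
  assumes "\<forall>y\<in>space M. \<bar>f y\<bar> \<le> K" "x \<in> space M" "0 \<le> K"
  shows "\<bar>fbar f x\<bar> \<le> K"
proof -
  have "ereal (fbar f x) \<le> ereal K" "ereal (-K) \<le> ereal (fbar f x)"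
    using limsup_avg_bound[OF assms] fbar_eq[OF assms] by auto
  then show ?thesis by (simp add: abs_le_iff)
qed

lemma fbar_exceed:
  assumes "\<forall>y\<in>space M. \<bar>f y\<bar> \<le> K" "x \<in> space M" "0 \<le> K"
    and "t < fbar f x"
  shows "\<exists>n\<ge>1. avg f n x > t"
proof (rule ccontr)
  assume "\<not> ?thesis"
  then have "eventually (\<lambda>n. ereal (avg f n x) \<le> ereal t) sequentially"
    by (auto simp: eventually_sequentially intro!: exI[of _ 1])
  then have "limsup (\<lambda>n. ereal (avg f n x)) \<le> ereal t" by (rule Limsup_bounded)
  then have "ereal (fbar f x) \<le> ereal t" using fbar_eq[OF assms(1-3)] by simp
  then show False using assms(4) by simp
qed


lemma bint:
  fixes f :: "'a \<Rightarrow> real"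
  assumes "f \<in> borel_measurable M" "\<forall>x\<in>space M. \<bar>f x\<bar> \<le> B"
  shows "integrable M f"
  by (rule integrable_const_bound[where B=B]) (use assms in \<open>auto intro!: AE_I2\<close>)

lemma fbar_T:
  assumes bnd: "\<forall>y\<in>space M. \<bar>f y\<bar> \<le> K" and x: "x \<in> space M" and K: "0 \<le> K"
  shows "fbar f (T x) = fbar f x"
proof -
  have TX: "T x \<in> space M" by (rule T_space[OF x])
  define d where "d n = avg f n (T x) - avg f (n+1) x" for n
  have dlim: "d \<longlonglongrightarrow> 0"
  proof (rule Lim_null_comparison)
    show "eventually (\<lambda>n. norm (d n) \<le> 2*K / real n) sequentially"
      unfolding eventually_sequentially
    proof (intro exI[of _ 1] allI impI)
      fix n :: nat assume n: "1 \<le> n"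
      then have np: "real n > 0" by simp
      have eq: "S f (Suc n) x = f x + S f n (T x)" by (rule S_Suc_left)
      have b1: "\<bar>S f (Suc n) x\<bar> \<le> real (Suc n) * K" by (rule S_bound[OF bnd x])
      have b2: "\<bar>f x\<bar> \<le> K" using bnd x by auto
      have aux: "(s - a)/m - s/(m+1) = s/(m*(m+1)) - a/m" if "m > 0" for s a m :: real
      proof -
        have h: "m \<noteq> 0" "m + 1 \<noteq> 0" using that by auto
        have e1: "s/m - s/(m+1) = (s*(m+1) - s*m)/(m*(m+1))" by (rule diff_frac_eq[OF h])
        have e2: "s*(m+1) - s*m = s" by (simp add: algebra_simps)
        have e: "s/(m*(m+1)) = s/m - s/(m+1)" using e1 e2 by simp
        show ?thesis by (simp add: e diff_divide_distrib)
      qed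
      have "d n = (S f (Suc n) x - f x) / real n - S f (Suc n) x / (real n + 1)"
        unfolding d_def avg_def using eq by simp
      also have "\<dots> = S f (Suc n) x / (real n * (real n + 1)) - f x / real n"
        by (rule aux[OF np])
      finally have dn: "d n = S f (Suc n) x / (real n * real (Suc n)) - f x / real n"
        by simp
      have "\<bar>d n\<bar> \<le> \<bar>S f (Suc n) x / (real n * real (Suc n))\<bar> + \<bar>f x / real n\<bar>"
        unfolding dn by (rule abs_triangle_ineq4)
      also have "\<dots> = \<bar>S f (Suc n) x\<bar> / (real n * real (Suc n)) + \<bar>f x\<bar> / real n"
        by (simp add: abs_divide abs_mult)
      also have "\<dots> \<le> (real (Suc n) * K) / (real n * real (Suc n)) + K / real n"
        using b1 b2 np by (intro add_mono divide_right_mono) auto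
      also have "real (Suc n) * K / (real n * real (Suc n)) = K / real n"
      proof -
        have "real (Suc n) \<noteq> 0" by (rule of_nat_neq_0)
        then show ?thesis by (simp only: mult.commute[of "real n"] mult_divide_mult_cancel_left_if) simp
      qed
      also have "K / real n + K / real n = 2 * K / real n" by simp
      finally show "norm (d n) \<le> 2 * K / real n" by simp
    qed
    show "(\<lambda>n. 2 * K / real n) \<longlonglongrightarrow> 0" by (rule lim_const_over_n)
  qed
  have dlim': "(\<lambda>n. ereal (d n)) \<longlonglongrightarrow> 0"
    using tendsto_ereal[OF dlim] by (simp add: zero_ereal_def)
  have "limsup (\<lambda>n. ereal (avg f n (T x))) = limsup (\<lambda>n. ereal (d n) + ereal (avg f (n+1) x))"
    by (simp add: d_def)
  also have "\<dots> = 0 + limsup (\<lambda>n. ereal (avg f (n+1) x))"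
    by (rule ereal_limsup_lim_add[OF dlim']) simp
  also have "\<dots> = limsup (\<lambda>n. ereal (avg f n x))"
    using limsup_shift[of "\<lambda>n. ereal (avg f n x)"] by simp
  finally have "ereal (fbar f (T x)) = ereal (fbar f x)"
    using fbar_eq[OF bnd TX K] fbar_eq[OF bnd x K] by simp
  then show ?thesis by simp
qed

lemma fbar_Tk:
  assumes bnd: "\<forall>y\<in>space M. \<bar>f y\<bar> \<le> K" and x: "x \<in> space M" and K: "0 \<le> K"
  shows "fbar f ((T^^k) x) = fbar f x"
proof (induction k)
  case 0 then show ?case by simp
next
  case (Suc k)
  have "fbar f ((T^^Suc k) x) = fbar f (T ((T^^k) x))" by simp
  also have "\<dots> = fbar f ((T^^k) x)" by (rule fbar_T[OF bnd Tk_space[OF x] K])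
  finally show ?case using Suc by simp
qed

lemma erg_const:
  fixes g :: "'a \<Rightarrow> real"
  assumes gm: "g \<in> borel_measurable M" and gb: "\<forall>x\<in>space M. \<bar>g x\<bar> \<le> K"
    and ginv: "\<forall>x\<in>space M. g (T x) = g x"
  shows "AE x in M. g x = integral\<^sup>L M g"
proof -
  define c where "c = integral\<^sup>L M g"
  have gi: "integrable M g" by (rule bint[OF gm gb])
  define B1 where "B1 = {x\<in>space M. c < g x}"
  define B2 where "B2 = {x\<in>space M. g x < c}"
  have B1s: "B1 \<in> sets M" using gm[unfolded borel_measurable_iff_greater] unfolding B1_def by (rule spec)
  have B2s: "B2 \<in> sets M" using gm[unfolded borel_measurable_iff_less] unfolding B2_def by (rule spec)
  have "T -` B1 \<inter> space M = B1" unfolding B1_def using ginv T_space by auto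
  then have m1: "measure M B1 = 0 \<or> measure M B1 = 1" using Terg[OF B1s] by simp
  have "T -` B2 \<inter> space M = B2" unfolding B2_def using ginv T_space by auto
  then have m2: "measure M B2 = 0 \<or> measure M B2 = 1" using Terg[OF B2s] by simp
  have ci: "integral\<^sup>L M (\<lambda>x. g x - c) = 0"
    using gi by (simp add: c_def prob_space)
  have ci': "integral\<^sup>L M (\<lambda>x. c - g x) = 0"
    using gi by (simp add: c_def prob_space)
  have n1: "measure M B1 \<noteq> 1"
  proof
    assume "measure M B1 = 1"
    then have ae: "AE x in M. x \<in> B1" by (rule AE_prob_1)
    then have "AE x in M. 0 \<le> g x - c" by eventually_elim (auto simp: B1_def)
    then have "AE x in M. g x - c = 0"
      using integral_nonneg_eq_0_iff_AE[of M "\<lambda>x. g x - c"] ci gi gm by auto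
    with ae have "AE x in M. False" by eventually_elim (auto simp: B1_def)
    then show False by (simp add: AE_False)
  qed
  have n2: "measure M B2 \<noteq> 1"
  proof
    assume "measure M B2 = 1"
    then have ae: "AE x in M. x \<in> B2" by (rule AE_prob_1)
    then have "AE x in M. 0 \<le> c - g x" by eventually_elim (auto simp: B2_def)
    then have "AE x in M. c - g x = 0"
      using integral_nonneg_eq_0_iff_AE[of M "\<lambda>x. c - g x"] ci' gi gm by auto
    with ae have "AE x in M. False" by eventually_elim (auto simp: B2_def)
    then show False by (simp add: AE_False)
  qed
  have z1: "B1 \<in> null_sets M" using m1 n1 B1s by (auto intro!: null_setsI simp: emeasure_eq_measure)
  have z2: "B2 \<in> null_sets M" using m2 n2 B2s by (auto intro!: null_setsI simp: emeasure_eq_measure)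
  have "AE x in M. x \<notin> B1" by (rule AE_not_in[OF z1])
  moreover have "AE x in M. x \<notin> B2" by (rule AE_not_in[OF z2])
  moreover have "AE x in M. x \<in> space M" by (rule AE_space)
  ultimately show ?thesis
    by eventually_elim (auto simp: B1_def B2_def c_def)
qed


lemma integral_S:
  assumes hm: "h \<in> borel_measurable M" and hb: "\<forall>x\<in>space M. \<bar>h x\<bar> \<le> B"
  shows "integral\<^sup>L M (S h L) = real L * integral\<^sup>L M h"
proof -
  have mk: "(\<lambda>x. h ((T^^k) x)) \<in> borel_measurable M" for k
    using measurable_comp[OF Tk_meas hm] by (simp add: comp_def)
  have ik: "integrable M (\<lambda>x. h ((T^^k) x))" for k
    by (rule bint[OF mk]) (use hb Tk_space in auto)
  have "integral\<^sup>L M (S h L) = integral\<^sup>L M (\<lambda>x. \<Sum>k<L. h ((T^^k) x))"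
    by (simp add: S_def[abs_def])
  also have "\<dots> = (\<Sum>k<L. integral\<^sup>L M (\<lambda>x. h ((T^^k) x)))"
    by (rule Bochner_Integration.integral_sum) (rule ik)
  also have "\<dots> = (\<Sum>k<L. integral\<^sup>L M h)"
    by (intro sum.cong refl integral_Tk[OF hm])
  finally show ?thesis by simp
qed

lemma fbar_int_le:
  assumes fm: "f \<in> borel_measurable M" and bnd: "\<forall>y\<in>space M. \<bar>f y\<bar> \<le> K" and K: "0 \<le> K"
  shows "integral\<^sup>L M (fbar f) \<le> integral\<^sup>L M f"
proof (rule field_le_epsilon)
  fix \<epsilon> :: real assume \<epsilon>: "0 < \<epsilon>"
  define g where "g x = fbar f x - \<epsilon>" for x
  have fbm: "fbar f \<in> borel_measurable M" by (rule fbar_meas[OF fm])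
  have gm: "g \<in> borel_measurable M" unfolding g_def[abs_def] using fbm by (rule borel_measurable_diff) simp
  have fbb: "\<forall>x\<in>space M. \<bar>fbar f x\<bar> \<le> K" using fbar_bound[OF bnd _ K] by auto
  have gb: "\<forall>x\<in>space M. \<bar>g x\<bar> \<le> K + \<epsilon>" using fbb \<epsilon> by (auto simp: g_def)
  have gup: "g x \<le> K" if "x \<in> space M" for x using fbb that \<epsilon> by (auto simp: g_def)
  have gT: "g ((T^^k) x) = g x" if "x \<in> space M" for x k
    using fbar_Tk[OF bnd that K] by (simp add: g_def)
  have fi: "integrable M f" by (rule bint[OF fm bnd])
  have fbi: "integrable M (fbar f)" by (rule bint[OF fbm fbb])
  have gi: "integrable M g" by (rule bint[OF gm gb])
  have intg: "integral\<^sup>L M g = integral\<^sup>L M (fbar f) - \<epsilon>"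
    unfolding g_def using fbi by (simp add: prob_space)
  define E where "E m = {x\<in>space M. \<forall>n\<in>{1..m}. S f n x \<le> real n * g x}" for m
  have Sm[measurable]: "\<And>n. S f n \<in> borel_measurable M" by (rule S_meas[OF fm])
  have gm'[measurable]: "g \<in> borel_measurable M" by (rule gm)
  have Es: "E m \<in> sets M" for m unfolding E_def by measurable
  have Edec: "decseq E" unfolding decseq_Suc_iff E_def by auto
  have Eempty: "(\<Inter>m. E m) = {}"
  proof (rule ccontr)
    assume "(\<Inter>m. E m) \<noteq> {}"
    then obtain x where x: "\<And>m. x \<in> E m" by blast
    then have xs: "x \<in> space M" by (auto simp: E_def)
    have "g x < fbar f x" by (simp add: g_def \<epsilon>)
    from fbar_exceed[OF bnd xs K this] obtain n where n: "n \<ge> 1" "avg f n x > g x" by blast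
    then have "real n * g x < S f n x"
      by (simp add: avg_def less_divide_eq mult.commute)
    moreover have "S f n x \<le> real n * g x" using x[of n] n(1) by (auto simp: E_def)
    ultimately show False by simp
  qed
  have Elim: "(\<lambda>m. measure M (E m)) \<longlonglongrightarrow> 0"
    using finite_Lim_measure_decseq[of E] Es Edec Eempty by auto
  have key: "integral\<^sup>L M g \<le> integral\<^sup>L M f + 2 * K * measure M (E m)" if m: "m \<ge> 1" for m
  proof -
    define h where "h x = f x + 2 * K * indicator (E m) x" for x
    have hm: "h \<in> borel_measurable M" unfolding h_def[abs_def] using fm Es[of m]
      by (intro borel_measurable_add borel_measurable_times borel_measurable_const borel_measurable_indicator) auto
    have hb: "\<forall>x\<in>space M. \<bar>h x\<bar> \<le> 3 * K"
      using bnd K by (auto simp: h_def indicator_def)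
    have hi: "integrable M h" by (rule bint[OF hm hb])
    have hf: "f x \<le> h x" for x using K by (simp add: h_def indicator_def)
    have hg: "g x - 2 * K \<le> h x" if "x \<in> space M" for x
      using gup[OF that] bnd that hf[of x] by (auto simp: abs_le_iff)
    have claim1: "\<exists>n\<in>{1..m}. real n * g x \<le> S h n x" if x: "x \<in> space M" for x
    proof (cases "x \<in> E m")
      case True
      have "g x \<le> K" by (rule gup[OF x])
      moreover have "-K \<le> f x" using bnd x by (auto simp: abs_le_iff)
      ultimately have "g x \<le> h x" using True by (simp add: h_def)
      then have "real 1 * g x \<le> S h 1 x" by (simp add: S_def)
      then show ?thesis using m by (intro bexI[of _ 1]) auto
    next
      case False
      then obtain n where n: "n \<in> {1..m}" "\<not> S f n x \<le> real n * g x" using x by (auto simp: E_def)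
      have "S f n x \<le> S h n x" unfolding S_def by (intro sum_mono hf)
      with n show ?thesis by (intro bexI[of _ n]) auto
    qed
    have claim2: "\<forall>x\<in>space M. real L * g x - real m * (2 * K) \<le> S h L x" for L
    proof (induction L rule: less_induct)
      case (less L)
      show ?case
      proof
        fix x assume x: "x \<in> space M"
        show "real L * g x - real m * (2 * K) \<le> S h L x"
        proof (cases "L \<le> m")
          case True
          have "(\<Sum>k<L. g x - 2 * K) \<le> (\<Sum>k<L. h ((T^^k) x))"
          proof (intro sum_mono)
            fix k assume "k \<in> {..<L}"
            show "g x - 2 * K \<le> h ((T^^k) x)"
              using hg[OF Tk_space[OF x, of k]] gT[OF x, of k] by simp
          qed
          then have "real L * (g x - 2 * K) \<le> S h L x" by (simp add: S_def)
          moreover have "real L * (2 * K) \<le> real m * (2 * K)"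
            using True K by (intro mult_right_mono) auto
          ultimately show ?thesis by (simp add: algebra_simps)
        next
          case False
          obtain n where n: "n \<in> {1..m}" "real n * g x \<le> S h n x" using claim1[OF x] by blast
          have nL: "n < L" using n(1) False by auto
          have Ldec: "L = n + (L - n)" using nL by simp
          have "L - n < L" using n(1) nL by auto
          then have IH: "real (L - n) * g ((T^^n) x) - real m * (2 * K) \<le> S h (L - n) ((T^^n) x)"
            using less.IH Tk_space[OF x] by blast
          have "S h L x = S h n x + S h (L - n) ((T^^n) x)"
            using S_add[of h n "L - n" x] Ldec by simp
          moreover have "real (L - n) = real L - real n" using nL by simp
          ultimately show ?thesis using IH n(2) gT[OF x, of n] by (simp add: algebra_simps)
        qed
      qed
    qed
    have intineq: "real L * integral\<^sup>L M g - real m * (2 * K) \<le> real L * integral\<^sup>L M h" for L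
    proof -
      have "integral\<^sup>L M (\<lambda>x. real L * g x - real m * (2 * K)) \<le> integral\<^sup>L M (S h L)"
      proof (rule integral_mono)
        show "integrable M (\<lambda>x. real L * g x - real m * (2 * K))" using gi by simp
        show "integrable M (S h L)"
          by (rule bint[OF S_meas[OF hm]]) (use S_bound[OF hb] in blast)
        show "\<And>x. x \<in> space M \<Longrightarrow> real L * g x - real m * (2 * K) \<le> S h L x"
          using claim2 by blast
      qed
      then show ?thesis using gi integral_S[OF hm hb, of L] by (simp add: prob_space)
    qed
    have gh: "integral\<^sup>L M g \<le> integral\<^sup>L M h"
    proof (rule ccontr)
      assume "\<not> ?thesis"
      then have pos: "integral\<^sup>L M g - integral\<^sup>L M h > 0" by simp
      obtain L :: nat where L: "real m * (2 * K) / (integral\<^sup>L M g - integral\<^sup>L M h) < real L"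
        using reals_Archimedean2 by blast
      then have "real m * (2 * K) < real L * (integral\<^sup>L M g - integral\<^sup>L M h)"
        using pos by (simp add: divide_less_eq)
      with intineq[of L] show False by (simp add: algebra_simps)
    qed
    have "integral\<^sup>L M h = integral\<^sup>L M f + 2 * K * measure M (E m)"
    proof -
      have ii: "integrable M (\<lambda>x. 2 * K * indicator (E m) x :: real)"
        using Es[of m] by (intro integrable_mult_right integrable_indicator) (auto simp: emeasure_eq_measure)
      have "integral\<^sup>L M h = integral\<^sup>L M f + integral\<^sup>L M (\<lambda>x. 2 * K * indicator (E m) x)"
        unfolding h_def by (rule Bochner_Integration.integral_add[OF fi ii])
      also have "integral\<^sup>L M (\<lambda>x. 2 * K * indicator (E m) x) = 2 * K * measure M (E m \<inter> space M)"
        by simp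
      also have "E m \<inter> space M = E m" using sets.sets_into_space[OF Es[of m]] by blast
      finally show ?thesis .
    qed
    with gh show ?thesis by simp
  qed
  have lim: "(\<lambda>m. integral\<^sup>L M f + 2 * K * measure M (E m)) \<longlonglongrightarrow> integral\<^sup>L M f"
    using tendsto_add[OF tendsto_const tendsto_mult[OF tendsto_const Elim]] by simp
  have "integral\<^sup>L M g \<le> integral\<^sup>L M f"
  proof (rule LIMSEQ_le_const[OF lim])
    show "\<exists>N. \<forall>n\<ge>N. integral\<^sup>L M g \<le> integral\<^sup>L M f + 2 * K * measure M (E n)"
      using key by auto
  qed
  then show "integral\<^sup>L M (fbar f) \<le> integral\<^sup>L M f + \<epsilon>" using intg by simp
qed

lemma avg_neg: "avg (\<lambda>y. - f y) n x = - avg f n x"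
  by (simp add: avg_def S_def sum_negf)

theorem birkhoff:
  assumes fm: "f \<in> borel_measurable M" and bnd: "\<forall>y\<in>space M. \<bar>f y\<bar> \<le> K" and K: "0 \<le> K"
  shows "AE x in M. (\<lambda>n. avg f n x) \<longlonglongrightarrow> integral\<^sup>L M f"
proof -
  define f' where "f' y = - f y" for y
  have f'eq: "f' = (\<lambda>y. - f y)" by (simp add: f'_def fun_eq_iff)
  have fm': "f' \<in> borel_measurable M" unfolding f'_def[abs_def] using fm by (rule borel_measurable_uminus)
  have bnd': "\<forall>y\<in>space M. \<bar>f' y\<bar> \<le> K" using bnd by (simp add: f'_def)
  have AE1: "AE x in M. fbar f x = integral\<^sup>L M (fbar f)"
    by (rule erg_const[OF fbar_meas[OF fm], of K]) (use fbar_bound[OF bnd _ K] fbar_T[OF bnd _ K] in auto)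
  have AE2: "AE x in M. fbar f' x = integral\<^sup>L M (fbar f')"
    by (rule erg_const[OF fbar_meas[OF fm'], of K]) (use fbar_bound[OF bnd' _ K] fbar_T[OF bnd' _ K] in auto)
  have i1: "integral\<^sup>L M (fbar f) \<le> integral\<^sup>L M f" by (rule fbar_int_le[OF fm bnd K])
  have i2: "integral\<^sup>L M (fbar f') \<le> - integral\<^sup>L M f"
    using fbar_int_le[OF fm' bnd' K] by (simp add: f'eq)
  show ?thesis
    using AE1 AE2 AE_space
  proof eventually_elim
    case (elim x)
    then have x: "x \<in> space M" by simp
    have "limsup (\<lambda>n. ereal (avg f n x)) = ereal (fbar f x)" using fbar_eq[OF bnd x K] by simp
    also have "\<dots> \<le> ereal (integral\<^sup>L M f)" using elim(1) i1 by simp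
    finally have ls: "limsup (\<lambda>n. ereal (avg f n x)) \<le> ereal (integral\<^sup>L M f)" .
    have "- liminf (\<lambda>n. ereal (avg f n x)) = limsup (\<lambda>n. - ereal (avg f n x))"
      using ereal_Limsup_uminus[of sequentially "\<lambda>n. ereal (avg f n x)"] by simp
    also have "\<dots> = limsup (\<lambda>n. ereal (avg f' n x))"
    proof -
      have "avg f' n x = - avg f n x" for n unfolding f'eq by (rule avg_neg)
      then show ?thesis by simp
    qed
    also have "\<dots> = ereal (fbar f' x)" using fbar_eq[OF bnd' x K] by simp
    also have "\<dots> \<le> ereal (- integral\<^sup>L M f)" using elim(2) i2 by simp
    finally have "ereal (integral\<^sup>L M f) \<le> liminf (\<lambda>n. ereal (avg f n x))"
      by (simp add: ereal_uminus_le_reorder)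
    with ls show ?case by (rule limsup_le_liminf_real)
  qed
qed


theorem birkhoff':
  assumes fm: "f \<in> borel_measurable M" and bnd: "\<forall>y\<in>space M. \<bar>f y\<bar> \<le> K" and K: "0 \<le> K"
  shows "AE x in M. (\<lambda>n. (\<Sum>k<n. f ((T^^k) x)) / real n) \<longlonglongrightarrow> integral\<^sup>L M f"
  using birkhoff[OF fm bnd K] by (simp add: avg_def S_def)

end

lemma inv_erg_mpt: "inv_ergodic_borel N A \<tau> \<Longrightarrow> mpt \<tau> shift"
proof -
  assume h: "inv_ergodic_borel N A \<tau>"
  have p: "prob_space \<tau>" using h unfolding inv_ergodic_borel_def borel_prob_on_Omega_def by blast
  have i: "shift \<in> measurable \<tau> \<tau> \<and> (\<forall>B\<in>sets \<tau>. emeasure \<tau> (shift -` B \<inter> space \<tau>) = emeasure \<tau> B)"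
    using h unfolding inv_ergodic_borel_def shift_invariant_def by blast
  have e: "\<forall>B\<in>sets \<tau>. shift -` B \<inter> space \<tau> = B \<longrightarrow> measure \<tau> B = 0 \<or> measure \<tau> B = 1"
    using h unfolding inv_ergodic_borel_def shift_ergodic_def by blast
  show ?thesis unfolding mpt_def mpt_axioms_def using p i e by blast
qed

lemma space_tau: "inv_ergodic_borel N A \<tau> \<Longrightarrow> space \<tau> = Omega N A"
proof -
  assume "inv_ergodic_borel N A \<tau>"
  then have "sets \<tau> = sets (restrict_space borel (Omega N A))"
    unfolding inv_ergodic_borel_def borel_prob_on_Omega_def by blast
  then have "space \<tau> = space (restrict_space borel (Omega N A))" by (rule sets_eq_imp_space_eq)
  then show ?thesis by (simp add: space_restrict_space)
qed

lemma meas01: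
  fixes G :: "nat \<Rightarrow> nat \<Rightarrow> real"
  shows "(\<lambda>x::nat\<Rightarrow>nat. G (x 0) (x 1)) \<in> borel_measurable borel"
proof -
  have c: "(\<lambda>x::nat\<Rightarrow>nat. x i) \<in> measurable borel (count_space UNIV)" for i
  proof -
    have "(\<lambda>x::nat\<Rightarrow>nat. x i) \<in> measurable borel borel" by (rule measurable_product_coordinates)
    moreover have "measurable (borel :: (nat\<Rightarrow>nat) measure) (borel :: nat measure) = measurable borel (count_space UNIV)"
      by (rule measurable_cong_sets[OF refl sets_borel_eq_count_space])
    ultimately show ?thesis by simp
  qed
  have g: "(\<lambda>x::nat\<Rightarrow>nat. G j (x 1)) \<in> borel_measurable borel" for j
  proof -
    have "G j \<in> measurable (count_space UNIV) borel" by simp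
    from measurable_compose[OF c[of 1] this] show ?thesis .
  qed
  show ?thesis by (rule measurable_compose_countable'[OF g c]) simp
qed

lemma F_meas_tau:
  assumes "inv_ergodic_borel N A \<tau>"
  shows "F_A A lam u \<in> borel_measurable \<tau>"
proof -
  have s: "sets \<tau> = sets (restrict_space borel (Omega N A))"
    using assms unfolding inv_ergodic_borel_def borel_prob_on_Omega_def by auto
  have "F_A A lam u = (\<lambda>x. (\<lambda>i j. u i * (1 - Pmat A lam u i j)) (x 0) (x 1))"
    by (simp add: F_A_def[abs_def])
  moreover have "\<dots> \<in> borel_measurable (restrict_space borel (Omega N A))"
    by (rule measurable_restrict_space1[OF meas01])
  ultimately have "F_A A lam u \<in> borel_measurable (restrict_space borel (Omega N A))" by simp
  moreover have "measurable \<tau> (borel::real measure) = measurable (restrict_space borel (Omega N A)) borel"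
    by (rule measurable_cong_sets[OF s refl])
  ultimately show ?thesis by simp
qed

lemma shift_pow: "(shift ^^ j) x i = x (i + j)"
proof (induction j arbitrary: i)
  case 0 then show ?case by simp
next
  case (Suc j)
  have "(shift ^^ Suc j) x i = shift ((shift ^^ j) x) i" by simp
  also have "\<dots> = (shift ^^ j) x (Suc i)" by (simp add: shift_def)
  also have "\<dots> = x (i + Suc j)" using Suc by simp
  finally show ?case .
qed


lemma F_on_Omega:
  assumes A01: "zero_one_matrix N A" and up: "\<forall>i\<in>{1..N}. u i > 0" and lam: "lam > 1"
    and x: "x \<in> Omega N A"
  shows "F_A A lam u x = u (x 0) - u (x 1) / lam"
proof -
  have a: "A (x 0) (x 1) = 1" using x by (simp add: Omega_def)
  have "u (x 0) > 0" using x up by (simp add: Omega_def)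
  then have "u (x 0) \<noteq> 0" by simp
  moreover have "lam \<noteq> 0" using lam by simp
  ultimately show ?thesis unfolding F_A_def Pmat_def a by (simp add: field_simps)
qed

theorem theorem3p1:
  fixes N :: nat and A :: "nat \<Rightarrow> nat \<Rightarrow> real" and lam :: real and u :: "nat \<Rightarrow> real"
  assumes "zero_one_matrix N A" and "primitive N A"
    and "PF_data N A lam u" and "lam > 1"
  shows "(\<forall>\<beta> \<tau>. admissible N A \<beta> \<and> \<beta> \<noteq> [] \<and> inv_ergodic_borel N A \<tau> \<longrightarrow>
           (AE x in \<tau>. x \<in> cyl N A \<beta> \<longrightarrow>
              (\<lambda>n. lam_beta A lam u \<beta> (proj n x) / real n)
                \<longlonglongrightarrow> lam * integral\<^sup>L \<tau> (F_A A lam u)))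
       \<and> (\<exists>c0 c1 :: real. 0 < c0 \<and> c0 \<le> c1 \<and> c1 < 1 \<and>
           (\<forall>\<tau>. inv_ergodic_borel N A \<tau> \<longrightarrow>
              c0 \<le> integral\<^sup>L \<tau> (F_A A lam u) \<and> integral\<^sup>L \<tau> (F_A A lam u) \<le> c1 / lam))"
proof -
  note A01 = assms(1)
  have lam: "lam > 1" by (rule assms(4))
  have up: "\<forall>i\<in>{1..N}. u i > 0" and usum: "(\<Sum>i\<in>{1..N}. u i) = 1"
    and eig: "\<forall>i\<in>{1..N}. (\<Sum>j\<in>{1..N}. A i j * u j) = lam * u i"
    using assms(3) unfolding PF_data_def by auto
  have N1: "1 \<le> N"
  proof (rule ccontr)
    assume "\<not> 1 \<le> N" then have "{1..N} = {}" by auto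
    with usum show False by simp
  qed
  have ule: "u i \<le> 1 / lam" if i: "i \<in> {1..N}" for i
  proof -
    have "lam * u i = (\<Sum>j\<in>{1..N}. A i j * u j)" using eig i by simp
    also have "\<dots> \<le> (\<Sum>j\<in>{1..N}. u j)"
    proof (rule sum_mono)
      fix j assume j: "j \<in> {1..N}"
      have "A i j \<in> {0, 1}" using A01 i j unfolding zero_one_matrix_def by blast
      then show "A i j * u j \<le> u j" using up j by auto
    qed
    finally have "lam * u i \<le> 1" using usum by simp
    then show ?thesis using lam by (simp add: field_simps)
  qed
  have ule1: "u i \<le> 1" if "i \<in> {1..N}" for i
    using ule[OF that] lam by (smt (verit) divide_le_eq_1)
  have uge0: "0 \<le> u i" if "i \<in> {1..N}" for i
  proof -
    have "u i > 0" using up that by blast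
    then show ?thesis by simp
  qed
  have Fbnd: "\<forall>y\<in>Omega N A. \<bar>F_A A lam u y\<bar> \<le> 2"
  proof
    fix y assume y: "y \<in> Omega N A"
    have y0: "y 0 \<in> {1..N}" and y1: "y 1 \<in> {1..N}" using y by (auto simp: Omega_def)
    have "0 \<le> u (y 1) / lam" using uge0[OF y1] lam by simp
    moreover have "u (y 1) / lam \<le> 1" using ule1[OF y1] lam by (simp add: field_simps)
    ultimately show "\<bar>F_A A lam u y\<bar> \<le> 2"
      using F_on_Omega[OF A01 up lam y] uge0[OF y0] ule1[OF y0] by (simp add: abs_le_iff)
  qed
  have part1: "\<forall>\<beta> \<tau>. admissible N A \<beta> \<and> \<beta> \<noteq> [] \<and> inv_ergodic_borel N A \<tau> \<longrightarrow>
           (AE x in \<tau>. x \<in> cyl N A \<beta> \<longrightarrow>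
              (\<lambda>n. lam_beta A lam u \<beta> (proj n x) / real n)
                \<longlonglongrightarrow> lam * integral\<^sup>L \<tau> (F_A A lam u))"
  proof (intro allI impI)
    fix \<beta> :: "nat list" and \<tau> :: "(nat \<Rightarrow> nat) measure"
    assume h: "admissible N A \<beta> \<and> \<beta> \<noteq> [] \<and> inv_ergodic_borel N A \<tau>"
    then have ie: "inv_ergodic_borel N A \<tau>" and bne: "\<beta> \<noteq> []" by auto
    interpret mpt \<tau> shift by (rule inv_erg_mpt[OF ie])
    have sp: "space \<tau> = Omega N A" by (rule space_tau[OF ie])
    define F where "F = F_A A lam u"
    define c where "c = integral\<^sup>L \<tau> F"
    have Fm: "F \<in> borel_measurable \<tau>" unfolding F_def by (rule F_meas_tau[OF ie])
    have Fb: "\<forall>y\<in>space \<tau>. \<bar>F y\<bar> \<le> 2" using Fbnd sp by (simp add: F_def)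
    have AE: "AE x in \<tau>. (\<lambda>n. (\<Sum>k<n. F ((shift^^k) x)) / real n) \<longlonglongrightarrow> c"
      unfolding c_def by (rule birkhoff'[OF Fm Fb]) simp
    define b where "b = length \<beta>"
    have b1: "b \<ge> 1" using bne by (cases \<beta>) (auto simp: b_def)
    show "AE x in \<tau>. x \<in> cyl N A \<beta> \<longrightarrow>
              (\<lambda>n. lam_beta A lam u \<beta> (proj n x) / real n) \<longlonglongrightarrow> lam * integral\<^sup>L \<tau> (F_A A lam u)"
      using AE
    proof eventually_elim
      case (elim x)
      show ?case
      proof
        assume xc: "x \<in> cyl N A \<beta>"
        then have xO: "x \<in> Omega N A" by (simp add: cyl_def)
        have xr: "x i \<in> {1..N}" for i using xO by (simp add: Omega_def)
        define SF where "SF n = (\<Sum>k<n. F ((shift^^k) x))" for n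
        have Fsh: "F ((shift^^j) x) = u (x j) * (1 - Pmat A lam u (x j) (x (Suc j)))" for j
          by (simp add: F_def F_A_def shift_pow)
        have eqn: "lam_beta A lam u \<beta> (proj n x) / real n =
            lam * (u (x (n - 1)) / real n) + lam * (SF (n - 1) / real n - SF (b - 1) / real n)"
          if n: "n > b" for n
        proof -
          have len: "length (proj n x) = n" by (simp add: proj_def)
          then have ne: "proj n x \<noteq> \<beta>" using n by (auto simp: b_def)
          have nth: "proj n x ! i = x i" if "i < n" for i using that by (simp add: proj_def)
          have lst: "last (proj n x) = x (n - 1)"
            using n b1 by (simp add: proj_def last_map)
          have sumeq: "(\<Sum>k<length (proj n x) - length \<beta>.
                 u (proj n x ! (length \<beta> + k - 1)) *
                 (1 - Pmat A lam u (proj n x ! (length \<beta> + k - 1)) (proj n x ! (length \<beta> + k))))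
               = (\<Sum>k<n - b. F ((shift^^(b - 1 + k)) x))"
          proof (rule sum.cong)
            show "{..<length (proj n x) - length \<beta>} = {..<n - b}" by (simp add: len b_def)
          next
            fix k assume "k \<in> {..<n - b}"
            then have k: "k < n - b" by simp
            have i1: "b + k - 1 < n" and i2: "b + k < n" using k n by auto
            have e: "Suc (b - 1 + k) = b + k" using b1 by simp
            have e2: "b + k - 1 = b - 1 + k" using b1 by simp
            show "u (proj n x ! (length \<beta> + k - 1)) *
                 (1 - Pmat A lam u (proj n x ! (length \<beta> + k - 1)) (proj n x ! (length \<beta> + k)))
               = F ((shift^^(b - 1 + k)) x)"
              unfolding b_def[symmetric] nth[OF i1] nth[OF i2] by (simp only: Fsh e e2)
          qed
          have split: "SF (n - 1) = SF (b - 1) + (\<Sum>k<n - b. F ((shift^^(b - 1 + k)) x))"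
          proof -
            have nn: "n - 1 = (b - 1) + (n - b)" using n b1 by simp
            have gen: "SF (a + m) = SF a + (\<Sum>k<m. F ((shift^^(a + k)) x))" for a m
              by (induction m) (simp_all add: SF_def)
            have "SF ((b - 1) + (n - b)) = SF (b - 1) + (\<Sum>k<n - b. F ((shift^^(b - 1 + k)) x))"
              by (rule gen)
            then show ?thesis using nn by simp
          qed
          have "lam_beta A lam u \<beta> (proj n x) = lam * u (x (n - 1)) + lam * (SF (n - 1) - SF (b - 1))"
            unfolding lam_beta_def using ne lst sumeq split by simp
          then show ?thesis by (simp add: add_divide_distrib diff_divide_distrib right_diff_distrib)
        qed
        have l1: "(\<lambda>n. u (x (n - 1)) / real n) \<longlonglongrightarrow> 0"
        proof (rule Lim_null_comparison)
          show "eventually (\<lambda>n. norm (u (x (n - 1)) / real n) \<le> 1 / real n) sequentially"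
          proof (rule always_eventually, rule allI)
            fix n
            have "\<bar>u (x (n - 1))\<bar> \<le> 1" using uge0[OF xr] ule1[OF xr] by simp
            then show "norm (u (x (n - 1)) / real n) \<le> 1 / real n"
              by (simp add: abs_divide divide_right_mono)
          qed
          show "(\<lambda>n. 1 / real n) \<longlonglongrightarrow> 0" by (rule lim_const_over_n)
        qed
        have avgl: "(\<lambda>n. SF n / real n) \<longlonglongrightarrow> c" using elim by (simp add: SF_def)
        have l2: "(\<lambda>n. SF (n - 1) / real n) \<longlonglongrightarrow> c"
        proof (rule LIMSEQ_imp_Suc)
          have "(\<lambda>n. SF n / real n * (real n / real (Suc n))) \<longlonglongrightarrow> c * 1"
            by (rule tendsto_mult[OF avgl LIMSEQ_n_over_Suc_n])
          moreover have "SF n / real n * (real n / real (Suc n)) = SF (Suc n - 1) / real (Suc n)" for n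
            by (cases "n = 0") (simp_all add: SF_def)
          ultimately show "(\<lambda>n. SF (Suc n - 1) / real (Suc n)) \<longlonglongrightarrow> c" by simp
        qed
        have l3: "(\<lambda>n. SF (b - 1) / real n) \<longlonglongrightarrow> 0" by (rule lim_const_over_n)
        have lim: "(\<lambda>n. lam * (u (x (n - 1)) / real n) + lam * (SF (n - 1) / real n - SF (b - 1) / real n))
            \<longlonglongrightarrow> lam * 0 + lam * (c - 0)"
          by (intro tendsto_add tendsto_mult tendsto_diff tendsto_const l1 l2 l3)
        have ev: "eventually (\<lambda>n. lam * (u (x (n - 1)) / real n) + lam * (SF (n - 1) / real n - SF (b - 1) / real n)
              = lam_beta A lam u \<beta> (proj n x) / real n) sequentially"
          unfolding eventually_sequentially by (intro exI[of _ "Suc b"]) (auto simp: eqn)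
        show "(\<lambda>n. lam_beta A lam u \<beta> (proj n x) / real n) \<longlonglongrightarrow> lam * integral\<^sup>L \<tau> (F_A A lam u)"
          using Lim_transform_eventually[OF lim ev] by (simp add: c_def F_def)
      qed
    qed
  qed
  define m where "m = Min (u ` {1..N})"
  have fin: "finite (u ` {1..N})" and nemp: "u ` {1..N} \<noteq> {}" using N1 by auto
  have mpos: "m > 0" unfolding m_def using fin nemp up by (subst Min_gr_iff) auto
  have mle: "m \<le> u i" if "i \<in> {1..N}" for i unfolding m_def using fin that by simp
  have m1: "m \<le> 1" using mle[of 1] ule1[of 1] N1 by simp
  define c1 where "c1 = 1 - 1 / lam"
  define c0 where "c0 = c1 * m"
  have c1pos: "0 < c1" using lam by (simp add: c1_def)
  have part2: "0 < c0 \<and> c0 \<le> c1 \<and> c1 < 1 \<and>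
           (\<forall>\<tau>. inv_ergodic_borel N A \<tau> \<longrightarrow>
              c0 \<le> integral\<^sup>L \<tau> (F_A A lam u) \<and> integral\<^sup>L \<tau> (F_A A lam u) \<le> c1 / lam)"
  proof (intro conjI allI impI)
    show "0 < c0" using c1pos mpos by (simp add: c0_def)
    show "c0 \<le> c1" using c1pos m1 by (simp add: c0_def mult_left_le)
    show "c1 < 1" using lam by (simp add: c1_def)
  next
    fix \<tau> :: "(nat \<Rightarrow> nat) measure"
    assume ie: "inv_ergodic_borel N A \<tau>"
    interpret mpt \<tau> shift by (rule inv_erg_mpt[OF ie])
    have sp: "space \<tau> = Omega N A" by (rule space_tau[OF ie])
    define U where "U x = u (x 0)" for x :: "nat \<Rightarrow> nat"
    have Um: "U \<in> borel_measurable \<tau>"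
    proof -
      have s: "sets \<tau> = sets (restrict_space borel (Omega N A))"
        using ie unfolding inv_ergodic_borel_def borel_prob_on_Omega_def by auto
      have "U = (\<lambda>x. (\<lambda>i j. u i) (x 0) (x 1))" by (simp add: U_def[abs_def])
      moreover have "\<dots> \<in> borel_measurable (restrict_space borel (Omega N A))"
        by (rule measurable_restrict_space1[OF meas01])
      ultimately have "U \<in> borel_measurable (restrict_space borel (Omega N A))" by simp
      moreover have "measurable \<tau> (borel::real measure) = measurable (restrict_space borel (Omega N A)) borel"
        by (rule measurable_cong_sets[OF s refl])
      ultimately show ?thesis by simp
    qed
    have Ub: "\<forall>x\<in>space \<tau>. \<bar>U x\<bar> \<le> 1" using sp uge0 ule1 by (auto simp: U_def Omega_def)
    have Ui: "integrable \<tau> U" by (rule bint[OF Um Ub])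
    have UT: "integral\<^sup>L \<tau> (\<lambda>x. U (shift x)) = integral\<^sup>L \<tau> U" by (rule integral_T[OF Um])
    have UTi: "integrable \<tau> (\<lambda>x. U (shift x))"
      by (rule bint[where B=1]) (use measurable_comp[OF Tm Um] Ub T_space in \<open>auto simp: comp_def\<close>)
    have Feq: "integral\<^sup>L \<tau> (F_A A lam u) = integral\<^sup>L \<tau> (\<lambda>x. U x - U (shift x) / lam)"
      by (rule Bochner_Integration.integral_cong[OF refl]) (simp add: sp F_on_Omega[OF A01 up lam] U_def shift_def)
    also have "\<dots> = integral\<^sup>L \<tau> U - integral\<^sup>L \<tau> (\<lambda>x. U (shift x)) / lam"
      using Ui UTi by simp
    also have "\<dots> = c1 * integral\<^sup>L \<tau> U" using UT by (simp add: c1_def algebra_simps)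
    finally have Fi: "integral\<^sup>L \<tau> (F_A A lam u) = c1 * integral\<^sup>L \<tau> U" .
    have "integral\<^sup>L \<tau> (\<lambda>x. m) \<le> integral\<^sup>L \<tau> U"
      by (rule integral_mono) (use Ui sp mle in \<open>auto simp: U_def Omega_def\<close>)
    then have lo: "m \<le> integral\<^sup>L \<tau> U" by (simp add: prob_space)
    have "integral\<^sup>L \<tau> U \<le> integral\<^sup>L \<tau> (\<lambda>x. 1 / lam)"
      by (rule integral_mono) (use Ui sp ule in \<open>auto simp: U_def Omega_def\<close>)
    then have hi: "integral\<^sup>L \<tau> U \<le> 1 / lam" by (simp add: prob_space)
    show "c0 \<le> integral\<^sup>L \<tau> (F_A A lam u)"
      unfolding Fi c0_def using lo c1pos by (simp add: mult_left_mono)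
    have "c1 * integral\<^sup>L \<tau> U \<le> c1 * (1 / lam)" using hi c1pos by (intro mult_left_mono) auto
    then show "integral\<^sup>L \<tau> (F_A A lam u) \<le> c1 / lam" unfolding Fi by simp
  qed
  show ?thesis using part1 part2 by blast
qed

end
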